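(* Let $b=(\mu_1>\dots>\mu_l>0)\in\mathcal{Y}(0)$, $m=\mu_1$, $n=l$, assume $m>n$, and let $(i_{n+1}\ge i_{n+2}\ge\dots\ge i_m)$ be the conjugate partition of $\tilde b=(\mu_1-n,\mu_2-(n-1),\dots,\mu_l-1)$. For $0\le k\le m-n$ define a block $B_k$, a string of $L_k$ equal signs, where $L_k=i_{n+k}-i_{n+k+1}$ for $1\le k\le m-n-1$, $L_{m-n}=i_m$, and $L_0$ is specified below. Then the relevant $i$-signature of $b$ equals the concatenation $B_0B_1\cdots B_{m-n}$, as follows: (1) If $m,n$ are both even, the $0$-signature, and if $m,n$ are both odd, the $1$-signature, is given by $L_0=n+1-i_{n+1}$, with $B_k$ consisting of $+$ signs for $k$ even and $-$ signs for $k$ odd. (2) If $m$ is even and $n$ odd, the $0$-signature, and if $m$ is odd and $n$ even, the $1$-signature, is given by $L_0=n-i_{n+1}$, with $B_k$ consisting of $-$ signs for $k$ even and $+$ signs for $k$ odd. (3) If $m$ is odd and $n$ even, the $0$-signature, and if $m$ is even and $n$ odd, the $1$-signature, is given by $L_0=n+1-i_{n+1}$, with $B_k$ consisting of $+$ signs for $k$ even and $-$ signs for $k$ odd. (4) If $m,n$ are both odd, the $0$-signature, and if $m,n$ are both even, the $1$-signature, is given by $L_0=n-i_{n+1}$, with $B_k$ consisting of $-$ signs for $k$ even and $+$ signs for $k$ odd. (Blocks of length $0$ are empty.)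
   Context: A charged partition of charge $j\in\{0,1\}$ is a partition (possibly empty) whose Young diagram (rows numbered from the top, columns from the left) has the box in row $r$, column $c$ labelled $j-r+c\pmod 2$. $\mathcal{Y}(0)$ is the set of charge-$0$ charged partitions with distinct nonzero parts. A column is $i$-removable if its bottom box is labelled $i$ and removing it leaves a Young diagram; it is $i$-addable if a box labelled $i$ can be added at its bottom leaving a Young diagram. The $i$-signature is the string of signs obtained by scanning the columns from left to right, including the first empty column (column $\mu_1+1$), writing $+$ for each $i$-addable column, $-$ for each $i$-removable column, and nothing otherwise. *)

theory Defs
  imports Main
begin

text \<open>A partition is a list of parts, weakly decreasing, parts positive.
  Rows and columns are numbered from 1. The charged partition of charge j
  labels the box in row r, column c by (j - r + c) mod 2.\<close>

datatype sign = Plus | Minus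

definition box_label :: "nat \<Rightarrow> nat \<Rightarrow> nat \<Rightarrow> int" where
  "box_label j r c = (int j - int r + int c) mod 2"

definition col_height :: "nat list \<Rightarrow> nat \<Rightarrow> nat" where
  "col_height mu c = length (filter (\<lambda>x. c \<le> x) mu)"

definition first_part :: "nat list \<Rightarrow> nat" where
  "first_part mu = (if mu = [] then 0 else hd mu)"

text \<open>Column c is i-removable: its bottom box exists, is labelled i, and removing it
  leaves a Young diagram (the next column is strictly shorter).\<close>
definition removable :: "nat \<Rightarrow> nat \<Rightarrow> nat list \<Rightarrow> nat \<Rightarrow> bool" where
  "removable j i mu c \<longleftrightarrow>
     col_height mu c > 0 \<and> box_label j (col_height mu c) c = int i \<and>
     col_height mu (c + 1) < col_height mu c"

text \<open>Column c is i-addable: the box below its bottom is labelled i and adding it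
  leaves a Young diagram (the previous column is strictly longer, or c = 1).\<close>
definition addable :: "nat \<Rightarrow> nat \<Rightarrow> nat list \<Rightarrow> nat \<Rightarrow> bool" where
  "addable j i mu c \<longleftrightarrow>
     box_label j (col_height mu c + 1) c = int i \<and>
     (c = 1 \<or> col_height mu c < col_height mu (c - 1))"

definition signature :: "nat \<Rightarrow> nat \<Rightarrow> nat list \<Rightarrow> sign list" where
  "signature j i mu =
     concat (map (\<lambda>c. (if addable j i mu c then [Plus] else [])
                     @ (if removable j i mu c then [Minus] else []))
                 [1..<first_part mu + 2])"

text \<open>Y(0): charge-0 charged partitions with distinct nonzero parts
  (the charge 0 is used in the signature below).\<close>
definition Y0 :: "nat list set" where
  "Y0 = {mu. sorted_wrt (>) mu \<and> (\<forall>x\<in>set mu. 0 < x)}"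

definition btilde :: "nat list \<Rightarrow> nat list" where
  "btilde mu = map (\<lambda>j. mu ! j - (length mu - j)) [0..<length mu]"

definition conj_part :: "nat list \<Rightarrow> nat \<Rightarrow> nat" where
  "conj_part lam k = length (filter (\<lambda>x. k \<le> x) lam)"

text \<open>i_p for n+1 \<le> p \<le> m: the conjugate of tilde b indexed as
  (i_{n+1} \<ge> ... \<ge> i_m), i.e. i_{n+k} = (tilde b)'_k.\<close>
definition iconj :: "nat list \<Rightarrow> nat \<Rightarrow> nat" where
  "iconj mu p = conj_part (btilde mu) (p - length mu)"

definition block_len :: "nat list \<Rightarrow> nat \<Rightarrow> nat \<Rightarrow> nat" where
  "block_len mu L0 k =
     (let m = hd mu; n = length mu in
      if k = 0 then L0
      else if k = m - n then iconj mu m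
      else iconj mu (n + k) - iconj mu (n + k + 1))"

definition blocks :: "nat list \<Rightarrow> nat \<Rightarrow> bool \<Rightarrow> sign list" where
  "blocks mu L0 plus_even =
     concat (map (\<lambda>k. replicate (block_len mu L0 k)
                         (if even k = plus_even then Plus else Minus))
                 [0..<hd mu - length mu + 1])"

end

theory Submission
  imports Defs
begin

lemma upt_split: "i \<le> j \<Longrightarrow> j \<le> k \<Longrightarrow> [i..<k] = [i..<j] @ [j..<k]"
  using upt_add_eq_append[of i j "k - j"] by simp

lemma bl_iff: "box_label j r c = int i \<longleftrightarrow> (j + r + c) mod 2 = i"
proof -
  have "(int j - int r + int c) mod 2 = int ((j + r + c) mod 2)"
  proof -
    have "int j - int r + int c = int (j + r + c) - 2 * int r" by simp
    then have "(int j - int r + int c) mod 2 = int (j + r + c) mod 2"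
      by (metis mod_diff_right_eq mod_mult_self1_is_0 diff_zero)
    also have "\<dots> = int ((j + r + c) mod 2)" by (simp add: zmod_int)
    finally show ?thesis .
  qed
  then show ?thesis by (simp add: box_label_def)
qed

definition g :: "nat \<Rightarrow> nat \<Rightarrow> nat list \<Rightarrow> nat \<Rightarrow> sign list" where
  "g j i mu c = (if addable j i mu c then [Plus] else []) @ (if removable j i mu c then [Minus] else [])"

lemma sig_g: "signature j i mu = concat (map (g j i mu) [1..<first_part mu + 2])"
  by (simp add: signature_def g_def[abs_def])

lemma ch_cons: "col_height (a#mu) c = (if c \<le> a then Suc (col_height mu c) else col_height mu c)"
  by (simp add: col_height_def)

lemma ch_zero: "\<forall>x\<in>set mu. x < c \<Longrightarrow> col_height mu c = 0"
  by (fastforce simp add: col_height_def filter_empty_conv)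

lemma le_fp: "sorted_wrt (>) mu \<Longrightarrow> x \<in> set mu \<Longrightarrow> x \<le> first_part mu"
  by (cases mu) (auto simp: first_part_def)

lemma addable_shift: "addable j i (a#mu) c = addable (Suc j) i mu c" if "c \<le> a"
  using that by (auto simp add: addable_def ch_cons bl_iff)

lemma removable_shift: "c < a \<Longrightarrow> removable j i (a#mu) c = removable (Suc j) i mu c"
  by (auto simp add: removable_def ch_cons bl_iff)

lemma sig_nil: "signature j i [] = (if j mod 2 = i then [Plus] else [])"
  by (simp add: sig_g g_def first_part_def addable_def removable_def col_height_def bl_iff)

lemma sig_cons:
  assumes s: "sorted_wrt (>) (a#mu)" and a: "a > 0" and i: "i \<le> 1"
  shows "signature j i (a#mu) = signature (Suc j) i mu @ [if (j + a) mod 2 = i then Plus else Minus]"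
proof -
  let ?G = "g (Suc j) i mu"
  have lt: "\<forall>x\<in>set mu. x < a" using s by simp
  have fpa: "first_part mu < a" using lt a by (cases mu) (auto simp: first_part_def)
  have "signature j i (a#mu) = concat (map (g j i (a#mu)) [1..<a+2])"
    by (simp add: sig_g first_part_def)
  also have "[1..<a+2] = [1..<a] @ [a, a+1]" using a
    by (simp add: upt_split[of 1 a "a+2"] upt_conv_Cons)
  finally have e1: "signature j i (a#mu) = concat (map (g j i (a#mu)) [1..<a]) @ g j i (a#mu) a @ g j i (a#mu) (a+1)"
    by simp
  have e2: "map (g j i (a#mu)) [1..<a] = map ?G [1..<a]"
    by (rule map_cong) (auto simp: g_def addable_shift removable_shift)
  have cha: "col_height mu a = 0" "col_height mu (a+1) = 0" using lt by (auto intro!: ch_zero)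
  have e3: "g j i (a#mu) a = ?G a @ (if (j + 1 + a) mod 2 = i then [Minus] else [])"
    using cha by (simp add: g_def addable_shift removable_def ch_cons bl_iff)
  have e4: "g j i (a#mu) (a+1) = (if (j + a) mod 2 = i then [Plus] else [])"
    using cha by (simp add: g_def addable_def removable_def ch_cons bl_iff)
  have e5: "concat (map ?G [1..<a+1]) = signature (Suc j) i mu"
  proof -
    have "[1..<a+1] = [1..<first_part mu + 2] @ [first_part mu + 2..<a+1]"
      using fpa by (intro upt_split) auto
    moreover have "concat (map ?G [first_part mu + 2..<a+1]) = []"
    proof -
      have "?G c = []" if "first_part mu + 2 \<le> c" for c
      proof -
        have "\<forall>x\<in>set mu. x < c" "\<forall>x\<in>set mu. x < c - 1"
          using le_fp[of mu] s that by fastforce+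
        then show ?thesis using that
          by (simp add: g_def addable_def removable_def ch_zero)
      qed
      then show ?thesis by (auto simp del: upt_Suc)
    qed
    ultimately show ?thesis by (simp add: sig_g)
  qed
  have "[1..<a+1] = [1..<a] @ [a]" using a by simp
  then have e6: "concat (map ?G [1..<a]) @ ?G a = signature (Suc j) i mu"
    using e5 by simp
  have par: "((j + 1 + a) mod 2 = i) = (\<not> (j + a) mod 2 = i)" using i by presburger
  show ?thesis
    unfolding e1 e2 e3 e4 par using e6[symmetric] by auto
qed

lemma sig_formula:
  assumes "sorted_wrt (>) mu" "\<forall>x\<in>set mu. 0 < x" "i \<le> 1"
  shows "signature j i mu = (if (j + length mu) mod 2 = i then [Plus] else []) @
     rev (map (\<lambda>k. if (j + k + mu!k) mod 2 = i then Plus else Minus) [0..<length mu])"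
  using assms
proof (induction mu arbitrary: j)
  case Nil
  then show ?case by (simp add: sig_nil)
next
  case (Cons a mu)
  have "signature j i (a#mu) = signature (Suc j) i mu @ [if (j + a) mod 2 = i then Plus else Minus]"
    using Cons.prems by (intro sig_cons) auto
  also have "signature (Suc j) i mu = (if (Suc j + length mu) mod 2 = i then [Plus] else []) @
     rev (map (\<lambda>k. if (Suc j + k + mu!k) mod 2 = i then Plus else Minus) [0..<length mu])"
    using Cons.prems by (intro Cons.IH) auto
  finally show ?case by (simp add: map_upt_Suc del: upt_Suc)
qed

definition cnt :: "nat list \<Rightarrow> nat \<Rightarrow> nat" where
  "cnt xs k = length (filter (\<lambda>x. x = k) xs)"

lemma sorted_decomp:
  "sorted xs \<Longrightarrow> \<forall>x\<in>set xs. L \<le> x \<and> x < U \<Longrightarrow>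
   xs = concat (map (\<lambda>k. replicate (cnt xs k) k) [L..<U])"
proof (induction xs arbitrary: L)
  case Nil
  then show ?case by (simp add: cnt_def)
next
  case (Cons a xs)
  have aLU: "L \<le> a" "a < U" using Cons.prems by auto
  have IH: "xs = concat (map (\<lambda>k. replicate (cnt xs k) k) [a..<U])"
    using Cons.prems by (intro Cons.IH) auto
  have sp: "[L..<U] = [L..<a] @ a # [Suc a..<U]"
  proof -
    have "[L..<U] = [L..<a] @ [a..<U]" using aLU by (intro upt_split) auto
    also have "[a..<U] = a # [Suc a..<U]" by (rule upt_conv_Cons[OF aLU(2)])
    finally show ?thesis .
  qed
  have z: "concat (map (\<lambda>k. replicate (cnt (a#xs) k) k) [L..<a]) = []"
  proof -
    have "cnt (a#xs) k = 0" if "k < a" for k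
      using Cons.prems that by (fastforce simp: cnt_def filter_empty_conv)
    then show ?thesis by simp
  qed
  have r: "map (\<lambda>k. replicate (cnt (a#xs) k) k) [Suc a..<U] = map (\<lambda>k. replicate (cnt xs k) k) [Suc a..<U]"
    by (rule map_cong) (auto simp: cnt_def)
  have c1: "concat (map (\<lambda>k. replicate (cnt xs k) k) [a..<U]) =
     replicate (cnt xs a) a @ concat (map (\<lambda>k. replicate (cnt xs k) k) [Suc a..<U])"
    using aLU by (simp add: upt_conv_Cons)
  have ca: "cnt (a#xs) a = Suc (cnt xs a)" by (simp add: cnt_def)
  have "concat (map (\<lambda>k. replicate (cnt (a#xs) k) k) [L..<U]) =
     replicate (Suc (cnt xs a)) a @ concat (map (\<lambda>k. replicate (cnt xs k) k) [Suc a..<U])"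
    unfolding sp map_append concat_append z list.map concat.simps r ca by simp
  also have "\<dots> = a # concat (map (\<lambda>k. replicate (cnt xs k) k) [a..<U])"
    unfolding c1 by simp
  also have "\<dots> = a # xs" using IH by simp
  finally show ?case by simp
qed

lemma conj_split: "conj_part xs k = cnt xs k + conj_part xs (Suc k)"
  by (induction xs) (auto simp: conj_part_def cnt_def)

lemma strict_nth: "sorted_wrt (>) mu \<Longrightarrow> i < j \<Longrightarrow> j < length mu \<Longrightarrow> mu!j + (j - i) \<le> mu!i"
proof (induction j)
  case 0
  then show ?case by simp
next
  case (Suc j)
  have a: "mu ! Suc j < mu ! j" using Suc.prems sorted_wrt_nth_less[of "(>)" mu j "Suc j"] by simp
  show ?case
  proof (cases "i = j")
    case True
    then show ?thesis using a by simp
  next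
    case False
    then have "mu!j + (j - i) \<le> mu!i" using Suc by simp
    then show ?thesis using a False Suc.prems by simp
  qed
qed

lemma lower_nth:
  assumes "mu \<in> Y0" "k < length mu"
  shows "length mu - k \<le> mu!k"
proof -
  let ?n = "length mu"
  have s: "sorted_wrt (>) mu" and p: "\<forall>x\<in>set mu. 0 < x" using assms by (auto simp: Y0_def)
  have "0 < mu!(?n - 1)" using p assms(2) by simp
  moreover have "mu!(?n - 1) + (?n - 1 - k) \<le> mu!k" if "k < ?n - 1"
    using strict_nth[OF s that] assms(2) by simp
  ultimately show ?thesis
  proof (cases "k < ?n - 1")
    case False
    then have "k = ?n - 1" using assms(2) by simp
    then show ?thesis using \<open>0 < mu!(?n - 1)\<close> assms(2) by simp
  next
    case True
    then show ?thesis using \<open>0 < mu!(?n - 1)\<close> strict_nth[OF s True] assms(2) by linarith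
  qed
qed


lemma general:
  assumes Y: "mu \<in> Y0" and i: "i \<le> 1"
  shows "signature 0 i mu = blocks mu (if length mu mod 2 = i then length mu + 1 - iconj mu (length mu + 1)
           else length mu - iconj mu (length mu + 1)) (length mu mod 2 = i)"
proof -
  define n where "n = length mu"
  define B where "B = btilde mu"
  define K where "K = hd mu - n"
  define sg where "sg x = (if (x + n) mod 2 = i then Plus else Minus)" for x
  define L0 where "L0 = (if n mod 2 = i then n + 1 - iconj mu (n + 1) else n - iconj mu (n + 1))"
  define base where "base = (if n mod 2 = i then [Plus] else [])"
  have s: "sorted_wrt (>) mu" and p: "\<forall>x\<in>set mu. 0 < x" using Y by (auto simp: Y0_def)
  have lenB: "length B = n" by (simp add: B_def btilde_def n_def)
  have Bnth: "B!j = mu!j - (n-j)" if "j < n" for j using that by (simp add: B_def btilde_def n_def)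
  have low: "n - j \<le> mu!j" if "j < n" for j using lower_nth[OF Y] that n_def by simp
  have dec: "B!b \<le> B!a" if "a < b" "b < n" for a b
  proof -
    have "mu!b + (b - a) \<le> mu!a" using strict_nth[OF s that(1)] that n_def by simp
    then show ?thesis using Bnth[of a] Bnth[of b] low[of b] that by simp
  qed
  have sortB: "sorted (rev B)"
    unfolding sorted_iff_nth_mono_less
  proof (intro allI impI)
    fix a b assume ab: "a < b" "b < length (rev B)"
    then show "rev B ! a \<le> rev B ! b" using dec[of "n - 1 - b" "n - 1 - a"] lenB
      by (simp add: rev_nth)
  qed
  have boundB: "\<forall>x\<in>set (rev B). 0 \<le> x \<and> x < Suc K"
  proof
    fix x assume "x \<in> set (rev B)"
    then obtain j where j: "j < n" "x = B!j" using lenB by (auto simp: in_set_conv_nth)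
    have "mu \<noteq> []" using j n_def by auto
    then have "B!0 = K" using Bnth[of 0] j by (simp add: K_def hd_conv_nth)
    then show "0 \<le> x \<and> x < Suc K" using dec[of 0 j] j by (cases j) auto
  qed
  have cntrev: "cnt (rev B) k = cnt B k" for k by (simp add: cnt_def rev_filter[symmetric])
  have step1: "signature 0 i mu = base @ rev (map (\<lambda>k. if (0 + k + mu!k) mod 2 = i then Plus else Minus) [0..<n])"
    using sig_formula[OF s p i, of 0] by (simp add: base_def n_def)
  have step2: "map (\<lambda>k. if (0 + k + mu!k) mod 2 = i then Plus else Minus) [0..<n] = map sg B"
  proof -
    have "map sg B = map (\<lambda>j. sg (mu!j - (n-j))) [0..<n]" by (simp add: B_def btilde_def n_def)
    also have "\<dots> = map (\<lambda>k. if (0 + k + mu!k) mod 2 = i then Plus else Minus) [0..<n]"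
    proof (rule map_cong)
      fix k assume "k \<in> set [0..<n]"
      then have "k < n" by simp
      then have "mu!k - (n-k) + n = k + mu!k" using low[of k] by simp
      then show "sg (mu!k - (n-k)) = (if (0 + k + mu!k) mod 2 = i then Plus else Minus)"
        by (simp add: sg_def add.commute)
    qed simp
    finally show ?thesis by simp
  qed
  have step3: "rev B = concat (map (\<lambda>k. replicate (cnt B k) k) [0..<Suc K])"
    using sorted_decomp[OF sortB boundB] by (simp add: cntrev)
  have step4: "signature 0 i mu = base @ concat (map (\<lambda>k. replicate (cnt B k) (sg k)) [0..<Suc K])"
  proof -
    have "signature 0 i mu = base @ map sg (rev B)" unfolding step1 step2 by (simp add: rev_map)
    also have "map sg (rev B) = concat (map (\<lambda>k. replicate (cnt B k) (sg k)) [0..<Suc K])"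
      by (subst step3) (simp add: map_concat comp_def)
    finally show ?thesis .
  qed
  have spg: "(if even k = (n mod 2 = i) then Plus else Minus) = sg k" for k
  proof -
    have "(even k = (n mod 2 = i)) = ((k + n) mod 2 = i)" using i by presburger
    then show ?thesis unfolding sg_def by simp
  qed
  have ic: "iconj mu q = conj_part B (q - n)" for q by (simp add: iconj_def B_def n_def)
  have cp0: "conj_part B 0 = n" using lenB by (simp add: conj_part_def)
  have c0: "cnt B 0 + conj_part B 1 = n" using conj_split[of B 0] cp0 by simp
  have cpK: "conj_part B (Suc K) = 0"
    using boundB by (fastforce simp: conj_part_def filter_empty_conv)
  have bl: "block_len mu L0 k = cnt B k" if "1 \<le> k" "k \<le> K" for k
  proof (cases "k = K")
    case True
    have hK: "\<not> hd mu \<le> length mu" using that True by (simp add: K_def n_def)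
    then show ?thesis using that conj_split[of B K] cpK True
      by (simp add: block_len_def ic K_def n_def Let_def)
  next
    case False
    then have "k \<noteq> hd mu - length mu" by (simp add: K_def n_def)
    then show ?thesis using that conj_split[of B k]
      by (simp add: block_len_def ic n_def Let_def)
  qed
  have b0: "base @ replicate (cnt B 0) (sg 0) = replicate L0 (sg 0)"
  proof (cases "n mod 2 = i")
    case True
    then have "L0 = Suc (cnt B 0)" using c0 by (simp add: L0_def ic)
    then show ?thesis using True by (simp add: base_def sg_def)
  next
    case False
    then have "L0 = cnt B 0" using c0 by (simp add: L0_def ic)
    then show ?thesis using False by (simp add: base_def)
  qed
  have rhs: "blocks mu L0 (n mod 2 = i) = concat (map (\<lambda>k. replicate (block_len mu L0 k) (sg k)) [0..<Suc K])"
    unfolding blocks_def spg by (simp add: K_def n_def del: upt_Suc)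
  have mc: "map (\<lambda>k. replicate (block_len mu L0 k) (sg k)) [1..<Suc K] =
            map (\<lambda>k. replicate (cnt B k) (sg k)) [1..<Suc K]"
    by (rule map_cong) (auto simp: bl)
  have bl00: "block_len mu L0 0 = L0" by (simp add: block_len_def)
  have up: "[0..<Suc K] = 0 # [1..<Suc K]" by (simp add: upt_conv_Cons del: upt_Suc)
  have "signature 0 i mu = blocks mu L0 (n mod 2 = i)"
    unfolding step4 rhs up list.map concat.simps mc bl00 b0[symmetric] by simp
  then show ?thesis by (simp add: L0_def n_def)
qed

theorem mainTheorem9:
  fixes mu :: "nat list" and m n :: nat
  assumes "mu \<in> Y0" and "m = hd mu" and "n = length mu" and "m > n"
  shows
   "((even m \<and> even n) \<longrightarrow> signature 0 0 mu = blocks mu (n + 1 - iconj mu (n + 1)) True) \<and>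
    ((odd m \<and> odd n) \<longrightarrow> signature 0 1 mu = blocks mu (n + 1 - iconj mu (n + 1)) True) \<and>
    ((even m \<and> odd n) \<longrightarrow> signature 0 0 mu = blocks mu (n - iconj mu (n + 1)) False) \<and>
    ((odd m \<and> even n) \<longrightarrow> signature 0 1 mu = blocks mu (n - iconj mu (n + 1)) False) \<and>
    ((odd m \<and> even n) \<longrightarrow> signature 0 0 mu = blocks mu (n + 1 - iconj mu (n + 1)) True) \<and>
    ((even m \<and> odd n) \<longrightarrow> signature 0 1 mu = blocks mu (n + 1 - iconj mu (n + 1)) True) \<and>
    ((odd m \<and> odd n) \<longrightarrow> signature 0 0 mu = blocks mu (n - iconj mu (n + 1)) False) \<and>
    ((even m \<and> even n) \<longrightarrow> signature 0 1 mu = blocks mu (n - iconj mu (n + 1)) False)"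
proof -
  have g0: "signature 0 0 mu = blocks mu (if n mod 2 = 0 then n + 1 - iconj mu (n + 1)
           else n - iconj mu (n + 1)) (n mod 2 = 0)"
    using general[OF assms(1), of 0] assms(3) by simp
  have g1: "signature 0 1 mu = blocks mu (if n mod 2 = 1 then n + 1 - iconj mu (n + 1)
           else n - iconj mu (n + 1)) (n mod 2 = 1)"
    using general[OF assms(1), of 1] assms(3) by simp
  show ?thesis
  proof (cases "even n")
    case True
    then have "n mod 2 = 0" by presburger
    then show ?thesis using g0 g1 True by simp
  next
    case False
    then have "n mod 2 = 1" by presburger
    then show ?thesis using g0 g1 False by simp
  qed
qed

end
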